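(* Let $\Lambda$ be a left cancellative small category. The core $\Lambda_c$ is a subcategory of $\Lambda$ containing all invertible elements. Furthermore: (1) if $\alpha\beta\in\Lambda_c$ (with $s(\alpha)=r(\beta)$), then $\alpha,\beta\in\Lambda_c$; (2) if $\alpha,\beta\in\Lambda_c$ with $r(\alpha)=r(\beta)$ and $\alpha\Lambda\cap\beta\Lambda=\bigcup_{i=1}^n\alpha_i\Lambda$ for $\alpha_i\in\Lambda$, then $\{\alpha_i\}_{i=1}^n$ is exhaustive (at $r(\alpha)$); (3) if $\Lambda$ is singly aligned, $\alpha,\beta\in\Lambda_c$ with $r(\alpha)=r(\beta)$, and $\alpha\Lambda\cap\beta\Lambda=\gamma\Lambda$, then $\gamma\in\Lambda_c$.
   Context: $\Lambda$ is a small category with objects $\Lambda^0$, range $r$ and source $s$; $\alpha\Lambda=\{\alpha\beta:s(\alpha)=r(\beta)\}$; $u$ is invertible if $uv=r(u)$ for some $v$. The core is $\Lambda_c=\{\alpha\in\Lambda:\alpha\Lambda\cap\beta\Lambda\neq\emptyset\text{ for all }\beta\in r(\alpha)\Lambda\}$. For $x\in\Lambda^0$, $B\subseteq x\Lambda$ is exhaustive (at $x$) if for every $\alpha\in x\Lambda$ there is $\beta\in B$ with $\alpha\Lambda\cap\beta\Lambda\neq\emptyset$. $\Lambda$ is singly aligned if every $\alpha\Lambda\cap\beta\Lambda$ is empty or of the form $\rho\Lambda$. *)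

theory Defs
  imports Main
begin

text \<open>A small category is given by its set of morphisms L, the set of objects L0
  (identified with the identity morphisms, L0 \<subseteq> L), range r, source s and a
  composition c, where c a b (written ab in the paper) is defined when s a = r b.\<close>

definition category ::
  "'a set \<Rightarrow> 'a set \<Rightarrow> ('a \<Rightarrow> 'a) \<Rightarrow> ('a \<Rightarrow> 'a) \<Rightarrow> ('a \<Rightarrow> 'a \<Rightarrow> 'a) \<Rightarrow> bool" where
  "category L L0 r s c \<longleftrightarrow>
     L0 \<subseteq> L \<and>
     (\<forall>a\<in>L. r a \<in> L0 \<and> s a \<in> L0) \<and>
     (\<forall>x\<in>L0. r x = x \<and> s x = x) \<and>
     (\<forall>a\<in>L. \<forall>b\<in>L. s a = r b \<longrightarrow> c a b \<in> L \<and> r (c a b) = r a \<and> s (c a b) = s b) \<and>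
     (\<forall>a\<in>L. c (r a) a = a \<and> c a (s a) = a) \<and>
     (\<forall>a\<in>L. \<forall>b\<in>L. \<forall>d\<in>L. s a = r b \<longrightarrow> s b = r d \<longrightarrow> c (c a b) d = c a (c b d))"

definition left_cancellative ::
  "'a set \<Rightarrow> ('a \<Rightarrow> 'a) \<Rightarrow> ('a \<Rightarrow> 'a) \<Rightarrow> ('a \<Rightarrow> 'a \<Rightarrow> 'a) \<Rightarrow> bool" where
  "left_cancellative L r s c \<longleftrightarrow>
     (\<forall>a\<in>L. \<forall>b\<in>L. \<forall>d\<in>L. s a = r b \<longrightarrow> s a = r d \<longrightarrow> c a b = c a d \<longrightarrow> b = d)"

definition rideal :: "'a set \<Rightarrow> ('a \<Rightarrow> 'a) \<Rightarrow> ('a \<Rightarrow> 'a) \<Rightarrow> ('a \<Rightarrow> 'a \<Rightarrow> 'a) \<Rightarrow> 'a \<Rightarrow> 'a set" where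
  "rideal L r s c a = {c a b | b. b \<in> L \<and> s a = r b}"

definition invertible :: "'a set \<Rightarrow> ('a \<Rightarrow> 'a) \<Rightarrow> ('a \<Rightarrow> 'a) \<Rightarrow> ('a \<Rightarrow> 'a \<Rightarrow> 'a) \<Rightarrow> 'a \<Rightarrow> bool" where
  "invertible L r s c u \<longleftrightarrow> u \<in> L \<and> (\<exists>v\<in>L. s u = r v \<and> c u v = r u)"

definition core :: "'a set \<Rightarrow> ('a \<Rightarrow> 'a) \<Rightarrow> ('a \<Rightarrow> 'a) \<Rightarrow> ('a \<Rightarrow> 'a \<Rightarrow> 'a) \<Rightarrow> 'a set" where
  "core L r s c = {a \<in> L. \<forall>b\<in>L. r b = r a \<longrightarrow> rideal L r s c a \<inter> rideal L r s c b \<noteq> {}}"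

definition exhaustive ::
  "'a set \<Rightarrow> ('a \<Rightarrow> 'a) \<Rightarrow> ('a \<Rightarrow> 'a) \<Rightarrow> ('a \<Rightarrow> 'a \<Rightarrow> 'a) \<Rightarrow> 'a \<Rightarrow> 'a set \<Rightarrow> bool" where
  "exhaustive L r s c x B \<longleftrightarrow>
     B \<subseteq> {b \<in> L. r b = x} \<and>
     (\<forall>a\<in>L. r a = x \<longrightarrow> (\<exists>b\<in>B. rideal L r s c a \<inter> rideal L r s c b \<noteq> {}))"

definition singly_aligned ::
  "'a set \<Rightarrow> ('a \<Rightarrow> 'a) \<Rightarrow> ('a \<Rightarrow> 'a) \<Rightarrow> ('a \<Rightarrow> 'a \<Rightarrow> 'a) \<Rightarrow> bool" where
  "singly_aligned L r s c \<longleftrightarrow>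
     (\<forall>a\<in>L. \<forall>b\<in>L. rideal L r s c a \<inter> rideal L r s c b = {} \<or>
        (\<exists>p\<in>L. rideal L r s c a \<inter> rideal L r s c b = rideal L r s c p))"

definition subcategory ::
  "'a set \<Rightarrow> 'a set \<Rightarrow> ('a \<Rightarrow> 'a) \<Rightarrow> ('a \<Rightarrow> 'a) \<Rightarrow> ('a \<Rightarrow> 'a \<Rightarrow> 'a) \<Rightarrow> 'a set \<Rightarrow> bool" where
  "subcategory L L0 r s c S \<longleftrightarrow> S \<subseteq> L \<and> L0 \<subseteq> S \<and>
     (\<forall>a\<in>S. \<forall>b\<in>S. s a = r b \<longrightarrow> c a b \<in> S)"

end

theory Submission
  imports Defs
begin

lemma cat_facts:
  assumes "category L L0 r s c"
  shows cat_L0: "L0 \<subseteq> L"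
    and cat_rs: "\<And>a. a \<in> L \<Longrightarrow> r a \<in> L0 \<and> s a \<in> L0"
    and cat_obj: "\<And>x. x \<in> L0 \<Longrightarrow> r x = x \<and> s x = x"
    and cat_comp: "\<And>a b. a \<in> L \<Longrightarrow> b \<in> L \<Longrightarrow> s a = r b \<Longrightarrow> c a b \<in> L \<and> r (c a b) = r a \<and> s (c a b) = s b"
    and cat_id: "\<And>a. a \<in> L \<Longrightarrow> c (r a) a = a \<and> c a (s a) = a"
    and cat_assoc: "\<And>a b d. a \<in> L \<Longrightarrow> b \<in> L \<Longrightarrow> d \<in> L \<Longrightarrow> s a = r b \<Longrightarrow> s b = r d \<Longrightarrow> c (c a b) d = c a (c b d)"
  using assms unfolding category_def by blast+

lemma rideal_iff: "x \<in> rideal L r s c a \<longleftrightarrow> (\<exists>b\<in>L. s a = r b \<and> x = c a b)"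
  unfolding rideal_def by blast

lemma rideal_self:
  assumes "category L L0 r s c" "a \<in> L"
  shows "a \<in> rideal L r s c a"
proof -
  have "s a \<in> L" "r (s a) = s a" using cat_rs[OF assms(1) assms(2)] cat_L0[OF assms(1)] cat_obj[OF assms(1)] by auto
  then show ?thesis using cat_id[OF assms] unfolding rideal_iff by metis
qed

lemma rideal_L:
  assumes "category L L0 r s c" "a \<in> L" "x \<in> rideal L r s c a"
  shows "x \<in> L \<and> r x = r a \<and> rideal L r s c x \<subseteq> rideal L r s c a"
proof -
  obtain b where b: "b \<in> L" "s a = r b" "x = c a b" using assms(3) unfolding rideal_iff by blast
  have xl: "x \<in> L" "r x = r a" "s x = s b" using cat_comp[OF assms(1) assms(2) b(1,2)] b by auto
  have "rideal L r s c x \<subseteq> rideal L r s c a"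
  proof
    fix y assume "y \<in> rideal L r s c x"
    then obtain d where d: "d \<in> L" "s x = r d" "y = c x d" unfolding rideal_iff by blast
    have "y = c a (c b d)" using cat_assoc[OF assms(1) assms(2) b(1) d(1) b(2)] d xl b by simp
    moreover have "c b d \<in> L" "r (c b d) = r b" using cat_comp[OF assms(1) b(1) d(1)] d xl by auto
    ultimately show "y \<in> rideal L r s c a" unfolding rideal_iff using b by metis
  qed
  then show ?thesis using xl by blast
qed

lemma core_iff: "a \<in> core L r s c \<longleftrightarrow> a \<in> L \<and> (\<forall>b\<in>L. r b = r a \<longrightarrow> rideal L r s c a \<inter> rideal L r s c b \<noteq> {})"
  unfolding core_def by simp

lemma core_meet:
  assumes "a \<in> core L r s c" "b \<in> L" "r b = r a"
  shows "\<exists>w. w \<in> rideal L r s c a \<and> w \<in> rideal L r s c b"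
  using assms unfolding core_def by blast

lemma core_L: "a \<in> core L r s c \<Longrightarrow> a \<in> L"
  unfolding core_def by simp

lemma core_I: "a \<in> L \<Longrightarrow> (\<And>b. b \<in> L \<Longrightarrow> r b = r a \<Longrightarrow> rideal L r s c a \<inter> rideal L r s c b \<noteq> {}) \<Longrightarrow> a \<in> core L r s c"
  unfolding core_def by simp

lemma rideal_E: "x \<in> rideal L r s c a \<Longrightarrow> (\<And>b. b \<in> L \<Longrightarrow> s a = r b \<Longrightarrow> x = c a b \<Longrightarrow> P) \<Longrightarrow> P"
  unfolding rideal_def by blast

lemma rideal_I: "b \<in> L \<Longrightarrow> s a = r b \<Longrightarrow> x = c a b \<Longrightarrow> x \<in> rideal L r s c a"
  unfolding rideal_def by blast

lemma exh:
  assumes cat: "category L L0 r s c"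
    and a: "a \<in> core L r s c" and b: "b \<in> core L r s c" and A: "A \<subseteq> L" and rab: "r a = r b"
    and eq: "rideal L r s c a \<inter> rideal L r s c b = (\<Union>x\<in>A. rideal L r s c x)"
  shows "exhaustive L r s c (r a) A"
  unfolding exhaustive_def
proof (intro conjI ballI impI)
  have aL: "a \<in> L" and bL: "b \<in> L" using a b unfolding core_iff by auto
  show "A \<subseteq> {b \<in> L. r b = r a}"
  proof
    fix x assume x: "x \<in> A"
    have xL: "x \<in> L" using x A by blast
    have "x \<in> (\<Union>x\<in>A. rideal L r s c x)" using x rideal_self[OF cat xL] by blast
    then have "x \<in> rideal L r s c a \<inter> rideal L r s c b" unfolding eq .
    then have "x \<in> rideal L r s c a" by blast
    then show "x \<in> {b \<in> L. r b = r a}" using rideal_L[OF cat aL] by simp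
  qed
  fix d assume dL: "d \<in> L" and rd: "r d = r a"
  have "rideal L r s c a \<inter> rideal L r s c d \<noteq> {}" using a dL rd unfolding core_iff by simp
  then obtain w where w: "w \<in> rideal L r s c a" "w \<in> rideal L r s c d" by blast
  have wL: "w \<in> L" "r w = r b" using rideal_L[OF cat aL w(1)] rab by auto
  have "rideal L r s c b \<inter> rideal L r s c w \<noteq> {}" using b wL unfolding core_iff by simp
  then obtain v where v: "v \<in> rideal L r s c b" "v \<in> rideal L r s c w" by blast
  have sw1: "rideal L r s c w \<subseteq> rideal L r s c a" using rideal_L[OF cat aL w(1)] by simp
  have sw2: "rideal L r s c w \<subseteq> rideal L r s c d" using rideal_L[OF cat dL w(2)] by simp
  have va: "v \<in> rideal L r s c a" and vd: "v \<in> rideal L r s c d" using v sw1 sw2 by auto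
  have "v \<in> rideal L r s c a \<inter> rideal L r s c b" using va v(1) by blast
  then have "v \<in> (\<Union>x\<in>A. rideal L r s c x)" unfolding eq .
  then obtain e where e: "e \<in> A" "v \<in> rideal L r s c e" by blast
  show "\<exists>b\<in>A. rideal L r s c d \<inter> rideal L r s c b \<noteq> {}"
    using e vd by blast
qed

theorem lemma4p13:
  assumes cat: "category L L0 r s c"
    and lc: "left_cancellative L r s c"
  shows "subcategory L L0 r s c (core L r s c)
    \<and> {u. invertible L r s c u} \<subseteq> core L r s c
    \<and> (\<forall>a\<in>L. \<forall>b\<in>L. s a = r b \<longrightarrow> c a b \<in> core L r s c \<longrightarrow>
          a \<in> core L r s c \<and> b \<in> core L r s c)
    \<and> (\<forall>a\<in>core L r s c. \<forall>b\<in>core L r s c. \<forall>A. finite A \<longrightarrow> A \<subseteq> L \<longrightarrow> r a = r b \<longrightarrow>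
          rideal L r s c a \<inter> rideal L r s c b = (\<Union>x\<in>A. rideal L r s c x) \<longrightarrow>
          exhaustive L r s c (r a) A)
    \<and> (singly_aligned L r s c \<longrightarrow>
        (\<forall>a\<in>core L r s c. \<forall>b\<in>core L r s c. \<forall>g\<in>L. r a = r b \<longrightarrow>
          rideal L r s c a \<inter> rideal L r s c b = rideal L r s c g \<longrightarrow>
          g \<in> core L r s c))"
proof (intro conjI)
  have P1: "L0 \<subseteq> core L r s c"
  proof
    fix x assume x: "x \<in> L0"
    have xL: "x \<in> L" using x cat_L0[OF cat] by blast
    show "x \<in> core L r s c"
    proof (rule core_I[OF xL])
      fix b assume bL: "b \<in> L" and rb: "r b = r x"
      have "b = c x b" using cat_id[OF cat bL] rb cat_obj[OF cat x] by simp
      moreover have "s x = r b" using rb cat_obj[OF cat x] by simp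
      ultimately have "b \<in> rideal L r s c x" using bL by (intro rideal_I) 
      then show "rideal L r s c x \<inter> rideal L r s c b \<noteq> {}" using rideal_self[OF cat bL] by blast
    qed
  qed
  have P2: "c a b \<in> core L r s c" if a: "a \<in> core L r s c" and b: "b \<in> core L r s c" and sab: "s a = r b" for a b
  proof -
    have aL: "a \<in> L" and bL: "b \<in> L" using a b by (simp_all add: core_L)
    have abL: "c a b \<in> L" "r (c a b) = r a" using cat_comp[OF cat aL bL sab] by auto
    show ?thesis
    proof (rule core_I[OF abL(1)])
      fix d assume dL: "d \<in> L" and rd: "r d = r (c a b)"
      obtain w where w: "w \<in> rideal L r s c a" "w \<in> rideal L r s c d" using core_meet[OF a dL] rd abL by auto
      obtain x where x: "x \<in> L" "s a = r x" "w = c a x" by (rule rideal_E[OF w(1)]) blast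
      obtain z where z: "z \<in> rideal L r s c b" "z \<in> rideal L r s c x" using core_meet[OF b x(1)] x sab by auto
      obtain y where y: "y \<in> L" "s b = r y" "z = c b y" by (rule rideal_E[OF z(1)]) blast
      have "c a z = c (c a b) y" using cat_assoc[OF cat aL bL y(1) sab y(2)] y by simp
      moreover have "s (c a b) = r y" using cat_comp[OF cat aL bL sab] y by simp
      ultimately have "c a z \<in> rideal L r s c (c a b)" using y(1) by (intro rideal_I)
      moreover have "c a z \<in> rideal L r s c d"
      proof -
        have "c a z \<in> rideal L r s c w"
        proof -
        obtain t where t: "t \<in> L" "s x = r t" "z = c x t" by (rule rideal_E[OF z(2)]) blast
        have "c a z = c w t" using cat_assoc[OF cat aL x(1) t(1) x(2) t(2)] t x by simp
        moreover have "s w = r t" using cat_comp[OF cat aL x(1) x(2)] x t by simp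
        ultimately show ?thesis using t(1) by (intro rideal_I)
      qed
        then show "c a z \<in> rideal L r s c d" using rideal_L[OF cat dL w(2)] by blast
      qed
      ultimately show "rideal L r s c (c a b) \<inter> rideal L r s c d \<noteq> {}" by blast
    qed
  qed
  have CL: "core L r s c \<subseteq> L" using core_L by (rule subsetI)
  show "subcategory L L0 r s c (core L r s c)"
    unfolding subcategory_def
  proof (intro conjI ballI impI CL P1)
    fix a b assume "a \<in> core L r s c" "b \<in> core L r s c" "s a = r b"
    then show "c a b \<in> core L r s c" by (rule P2)
  qed
  show "{u. invertible L r s c u} \<subseteq> core L r s c"
  proof
    fix u assume "u \<in> {u. invertible L r s c u}"
    then obtain v where uL: "u \<in> L" and v: "v \<in> L" "s u = r v" "c u v = r u"
      unfolding invertible_def by blast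
    have ru: "r u \<in> L0" using cat_rs[OF cat uL] by blast
    have "s v = s (c u v)" using cat_comp[OF cat uL v(1) v(2)] by simp
    also have "\<dots> = r u" using v(3) cat_obj[OF cat ru] by simp
    finally have sv: "s v = r u" .
    show "u \<in> core L r s c"
    proof (rule core_I[OF uL])
      fix b assume bL: "b \<in> L" and rb: "r b = r u"
      have "c u (c v b) = c (c u v) b" using cat_assoc[OF cat uL v(1) bL v(2)] sv rb by simp
      also have "\<dots> = b" using v(3) rb cat_id[OF cat bL] by simp
      finally have e: "b = c u (c v b)" by simp
      moreover have "c v b \<in> L" "r (c v b) = r v" using cat_comp[OF cat v(1) bL] sv rb by auto
      ultimately have "b \<in> rideal L r s c u" using v(2) by (intro rideal_I) simp_all
      then show "rideal L r s c u \<inter> rideal L r s c b \<noteq> {}" using rideal_self[OF cat bL] by blast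
    qed
  qed
  show "\<forall>a\<in>L. \<forall>b\<in>L. s a = r b \<longrightarrow> c a b \<in> core L r s c \<longrightarrow>
          a \<in> core L r s c \<and> b \<in> core L r s c"
  proof (intro ballI impI conjI)
    fix a b assume aL: "a \<in> L" and bL: "b \<in> L" and sab: "s a = r b" and ab: "c a b \<in> core L r s c"
    have abL: "c a b \<in> L" "r (c a b) = r a" using cat_comp[OF cat aL bL sab] by auto
    show "a \<in> core L r s c"
    proof (rule core_I[OF aL])
      fix d assume dL: "d \<in> L" and rd: "r d = r a"
      obtain w where w: "w \<in> rideal L r s c (c a b)" "w \<in> rideal L r s c d" using core_meet[OF ab dL] rd abL by auto
      have "c a b \<in> rideal L r s c a" using bL sab by (intro rideal_I) simp_all
      then have "w \<in> rideal L r s c a" using rideal_L[OF cat aL] w(1) by blast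
      then show "rideal L r s c a \<inter> rideal L r s c d \<noteq> {}" using w(2) by blast
    qed
    show "b \<in> core L r s c"
    proof (rule core_I[OF bL])
      fix d assume dL: "d \<in> L" and rd: "r d = r b"
      have adL: "c a d \<in> L" "r (c a d) = r a" using cat_comp[OF cat aL dL] sab rd by auto
      obtain w where w: "w \<in> rideal L r s c (c a b)" "w \<in> rideal L r s c (c a d)" using core_meet[OF ab adL(1)] adL abL by auto
      obtain x where x: "x \<in> L" "s (c a b) = r x" "w = c (c a b) x" by (rule rideal_E[OF w(1)]) blast
      obtain y where y: "y \<in> L" "s (c a d) = r y" "w = c (c a d) y" by (rule rideal_E[OF w(2)]) blast
      have sx: "s b = r x" using x cat_comp[OF cat aL bL sab] by simp
      have sy: "s d = r y" using y cat_comp[OF cat aL dL] sab rd by simp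
      have e1: "w = c a (c b x)" using cat_assoc[OF cat aL bL x(1) sab sx] x by simp
      have e2: "w = c a (c d y)" using cat_assoc[OF cat aL dL y(1)] sab rd sy y by simp
      have bx: "c b x \<in> L" "r (c b x) = r b" using cat_comp[OF cat bL x(1) sx] by auto
      have dy: "c d y \<in> L" "r (c d y) = r d" using cat_comp[OF cat dL y(1) sy] by auto
      have lc': "\<And>p q. p \<in> L \<Longrightarrow> q \<in> L \<Longrightarrow> s a = r p \<Longrightarrow> s a = r q \<Longrightarrow> c a p = c a q \<Longrightarrow> p = q"
        using lc aL unfolding left_cancellative_def by blast
      have "c b x = c d y" using lc'[OF bx(1) dy(1)] bx dy e1 e2 sab rd by simp
      then have "c b x \<in> rideal L r s c b" "c b x \<in> rideal L r s c d"
        using rideal_I[of x L s b r "c b x" c] rideal_I[of y L s d r "c b x" c] x(1) y(1) sx sy by simp_all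
      then show "rideal L r s c b \<inter> rideal L r s c d \<noteq> {}" by blast
    qed
  qed
  show "\<forall>a\<in>core L r s c. \<forall>b\<in>core L r s c. \<forall>A. finite A \<longrightarrow> A \<subseteq> L \<longrightarrow> r a = r b \<longrightarrow>
          rideal L r s c a \<inter> rideal L r s c b = (\<Union>x\<in>A. rideal L r s c x) \<longrightarrow>
          exhaustive L r s c (r a) A"
  proof (intro ballI allI impI)
    fix a b A assume "a \<in> core L r s c" "b \<in> core L r s c" "finite A" "A \<subseteq> L" "r a = r b"
      "rideal L r s c a \<inter> rideal L r s c b = (\<Union>x\<in>A. rideal L r s c x)"
    then show "exhaustive L r s c (r a) A" using exh[OF cat] by simp
  qed
  show "singly_aligned L r s c \<longrightarrow>
        (\<forall>a\<in>core L r s c. \<forall>b\<in>core L r s c. \<forall>g\<in>L. r a = r b \<longrightarrow>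
          rideal L r s c a \<inter> rideal L r s c b = rideal L r s c g \<longrightarrow>
          g \<in> core L r s c)"
  proof (intro impI ballI)
    fix a b g assume a: "a \<in> core L r s c" and b: "b \<in> core L r s c" and gL: "g \<in> L"
      and rab: "r a = r b" and eq: "rideal L r s c a \<inter> rideal L r s c b = rideal L r s c g"
    have ex: "exhaustive L r s c (r a) {g}" using exh[OF cat a b _ rab] eq gL by simp
    have "g \<in> rideal L r s c a \<inter> rideal L r s c b" unfolding eq using rideal_self[OF cat gL] .
    then have rg: "r g = r a" using rideal_L[OF cat core_L[OF a]] by blast
    show "g \<in> core L r s c"
    proof (rule core_I[OF gL])
      fix d assume dL: "d \<in> L" and rd: "r d = r g"
      have "rideal L r s c d \<inter> rideal L r s c g \<noteq> {}" using ex dL rd rg unfolding exhaustive_def by auto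
      then show "rideal L r s c g \<inter> rideal L r s c d \<noteq> {}" by blast
    qed
  qed
qed

end
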